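(* Let $S$ be an infinite set and $\mathcal{F}\subseteq 2^S$ closed under finite unions. Let $\mathbf{A}=(A_1,\dots,A_k)$, $k>1$, be a classification problem. Then $\mathbf{A}\in\mathit{core}_k(\mathcal{F})$ if and only if $(A_i,A_j)\in\mathit{core}_2(\mathcal{F})$ for all $1\le i\ne j\le k$.
   Context: A classification problem is a vector $(A_1,\dots,A_k)$, $k\ge1$, of pairwise disjoint infinite subsets of $S$, of length $k$. For vectors $\mathbf{B}=(B_1,\dots,B_m)$, $\mathbf{Q}=(Q_1,\dots,Q_k)$, $\mathbf{B}\le\mathbf{Q}$ means $1\le m\le k$ and there is an injective $\sigma:\{1,\dots,m\}\to\{1,\dots,k\}$ with $B_i\subseteq Q_{\sigma(i)}$. An $\mathcal{F}$-partition is a vector of pairwise disjoint members of $\mathcal{F}$ whose union is $S$. $\mathit{class}_k(\mathcal{F})$: classification problems $\mathbf{A}$ of length $k$ with $\mathbf{A}\le\mathbf{Q}$ for some $\mathcal{F}$-partition $\mathbf{Q}$ of length $k$. For $k>1$, $\mathit{core}_k(\mathcal{F})$ is the set of classification problems $\mathbf{A}$ of length $k$ such that every classification problem $\mathbf{A}'\le\mathbf{A}$ of length $|\mathbf{A}'|>1$ satisfies $\mathbf{A}'\notin\mathit{class}_{|\mathbf{A}'|}(\mathcal{F})$. *)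

theory Defs
  imports Main
begin

text \<open>Vectors are lists; index i of the paper (1-based) is position i-1 of the list.\<close>

definition pairwise_disj :: "'a set list \<Rightarrow> bool" where
  "pairwise_disj A \<longleftrightarrow> (\<forall>i<length A. \<forall>j<length A. i \<noteq> j \<longrightarrow> A ! i \<inter> A ! j = {})"

definition classification_problem :: "'a set \<Rightarrow> 'a set list \<Rightarrow> bool" where
  "classification_problem S A \<longleftrightarrow> length A \<ge> 1 \<and> pairwise_disj A \<and>
     (\<forall>i<length A. A ! i \<subseteq> S \<and> infinite (A ! i))"

definition vec_le :: "'a set list \<Rightarrow> 'a set list \<Rightarrow> bool" where
  "vec_le B Q \<longleftrightarrow> 1 \<le> length B \<and> length B \<le> length Q \<and>
     (\<exists>\<sigma>. inj_on \<sigma> {..<length B} \<and> \<sigma> ` {..<length B} \<subseteq> {..<length Q} \<and>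
          (\<forall>i<length B. B ! i \<subseteq> Q ! (\<sigma> i)))"

definition F_partition :: "'a set \<Rightarrow> 'a set set \<Rightarrow> 'a set list \<Rightarrow> bool" where
  "F_partition S F Q \<longleftrightarrow> pairwise_disj Q \<and> set Q \<subseteq> F \<and> \<Union> (set Q) = S"

definition class_k :: "'a set \<Rightarrow> 'a set set \<Rightarrow> nat \<Rightarrow> 'a set list set" where
  "class_k S F k = {A. classification_problem S A \<and> length A = k \<and>
     (\<exists>Q. F_partition S F Q \<and> length Q = k \<and> vec_le A Q)}"

definition core_k :: "'a set \<Rightarrow> 'a set set \<Rightarrow> nat \<Rightarrow> 'a set list set" where
  "core_k S F k = {A. classification_problem S A \<and> length A = k \<and>
     (\<forall>A'. classification_problem S A' \<and> vec_le A' A \<and> length A' > 1 \<longrightarrow>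
            A' \<notin> class_k S F (length A'))}"

end

theory Submission
  imports Defs
begin

lemma union_in_F:
  assumes "finite X" "X \<noteq> {}" "X \<subseteq> F"
    and "\<And>X Y. X \<in> F \<Longrightarrow> Y \<in> F \<Longrightarrow> X \<union> Y \<in> F"
  shows "\<Union>X \<in> F"
  using assms(1,2,3)
proof (induction X rule: finite_ne_induct)
  case (singleton x) then show ?case by simp
next
  case (insert x X) then show ?case using assms(4) by simp
qed

lemma pair_cp:
  assumes "classification_problem S A" "i < length A" "j < length A" "i \<noteq> j"
  shows "classification_problem S [A ! i, A ! j]"
  using assms unfolding classification_problem_def pairwise_disj_def
  by (auto simp: less_2_cases_iff nth_Cons' split: if_splits)

theorem lemma3p4:
  fixes S :: "'a set" and F :: "'a set set" and A :: "'a set list" and k :: nat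
  assumes "infinite S"
    and "F \<subseteq> Pow S"
    and "\<And>X Y. X \<in> F \<Longrightarrow> Y \<in> F \<Longrightarrow> X \<union> Y \<in> F"
    and "classification_problem S A"
    and "length A = k"
    and "k > 1"
  shows "A \<in> core_k S F k \<longleftrightarrow>
         (\<forall>i<k. \<forall>j<k. i \<noteq> j \<longrightarrow> [A ! i, A ! j] \<in> core_k S F 2)"
proof
  assume core: "A \<in> core_k S F k"
  show "\<forall>i<k. \<forall>j<k. i \<noteq> j \<longrightarrow> [A ! i, A ! j] \<in> core_k S F 2"
  proof (intro allI impI)
    fix i j assume ij: "i < k" "j < k" "i \<noteq> j"
    have cp: "classification_problem S [A ! i, A ! j]"
      using pair_cp[OF assms(4)] ij assms(5) by auto
    show "[A ! i, A ! j] \<in> core_k S F 2"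
      unfolding core_k_def
    proof (intro CollectI conjI allI impI cp)
      fix A' assume H: "classification_problem S A' \<and> vec_le A' [A ! i, A ! j] \<and> 1 < length A'"
      have len: "length A' \<le> 2" using H unfolding vec_le_def by simp
      from H obtain \<sigma> where s: "inj_on \<sigma> {..<length A'}" "\<sigma> ` {..<length A'} \<subseteq> {..<2}"
        "\<forall>i'<length A'. A' ! i' \<subseteq> [A ! i, A ! j] ! (\<sigma> i')"
        unfolding vec_le_def length_Cons list.size(3) numeral_2_eq_2 by auto
      define \<rho> where "\<rho> = (\<lambda>x. if \<sigma> x = 0 then i else j)"
      have "vec_le A' A"
        unfolding vec_le_def
      proof (intro conjI exI[of _ \<rho>])
        show "1 \<le> length A'" using H by auto
        show "length A' \<le> length A" using len assms(5,6) by auto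
        show "inj_on \<rho> {..<length A'}"
        proof (rule inj_onI)
          fix x y assume xy: "x \<in> {..<length A'}" "y \<in> {..<length A'}" "\<rho> x = \<rho> y"
          have "\<sigma> x < 2" "\<sigma> y < 2" using s(2) xy(1,2) by auto
          then have "\<sigma> x = \<sigma> y" using xy(3) ij(3) unfolding \<rho>_def
            by (auto split: if_splits)
          then show "x = y" using s(1) xy(1,2) by (meson inj_onD)
        qed
        show "\<rho> ` {..<length A'} \<subseteq> {..<length A}" using ij assms(5) by (auto simp: \<rho>_def)
        show "\<forall>i'<length A'. A' ! i' \<subseteq> A ! \<rho> i'"
        proof (intro allI impI)
          fix x assume x: "x < length A'"
          have "\<sigma> x < 2" using s(2) x by auto
          then have "\<sigma> x = 0 \<or> \<sigma> x = 1" by auto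
          moreover have "A' ! x \<subseteq> [A ! i, A ! j] ! \<sigma> x" using s(3) x by blast
          ultimately show "A' ! x \<subseteq> A ! \<rho> x" unfolding \<rho>_def by auto
        qed
      qed
      then show "A' \<notin> class_k S F (length A')" using core H unfolding core_k_def by auto
    next
      show "length [A ! i, A ! j] = 2" by simp
    qed
  qed
next
  assume P: "\<forall>i<k. \<forall>j<k. i \<noteq> j \<longrightarrow> [A ! i, A ! j] \<in> core_k S F 2"
  show "A \<in> core_k S F k"
    unfolding core_k_def
  proof (intro CollectI conjI allI impI assms(4,5))
    fix A' assume H: "classification_problem S A' \<and> vec_le A' A \<and> 1 < length A'"
    show "A' \<notin> class_k S F (length A')"
    proof
      assume C: "A' \<in> class_k S F (length A')"
      define m where "m = length A'"
      have m: "m > 1" using H m_def by auto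
      obtain \<sigma> where s: "inj_on \<sigma> {..<m}" "\<sigma> ` {..<m} \<subseteq> {..<k}"
        "\<forall>i'<m. A' ! i' \<subseteq> A ! (\<sigma> i')"
        using H assms(5) unfolding vec_le_def m_def by auto
      obtain Q \<tau> where Q: "F_partition S F Q" "length Q = m" "inj_on \<tau> {..<m}"
        "\<tau> ` {..<m} \<subseteq> {..<m}" "\<forall>i'<m. A' ! i' \<subseteq> Q ! (\<tau> i')"
        using C unfolding class_k_def vec_le_def m_def by auto
      have s01: "\<sigma> 0 < k" "\<sigma> 1 < k" "\<sigma> 0 \<noteq> \<sigma> 1"
      proof -
        have "0 \<in> {..<m}" "1 \<in> {..<m}" using m by auto
        then show "\<sigma> 0 < k" "\<sigma> 1 < k" "\<sigma> 0 \<noteq> \<sigma> 1"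
          using s(2) s(1) by (blast, blast, metis inj_onD zero_neq_one)
      qed
      have t01: "\<tau> 0 < m" "\<tau> 1 < m" "\<tau> 0 \<noteq> \<tau> 1"
      proof -
        have "0 \<in> {..<m}" "1 \<in> {..<m}" using m by auto
        then show "\<tau> 0 < m" "\<tau> 1 < m" "\<tau> 0 \<noteq> \<tau> 1"
          using Q(4) Q(3) by (blast, blast, metis inj_onD zero_neq_one)
      qed
      have Qdisj: "\<And>a b. a < m \<Longrightarrow> b < m \<Longrightarrow> a \<noteq> b \<Longrightarrow> Q ! a \<inter> Q ! b = {}"
        using Q(1,2) unfolding F_partition_def pairwise_disj_def by auto
      have QF: "\<And>a. a < m \<Longrightarrow> Q ! a \<in> F"
        using Q(1,2) unfolding F_partition_def by auto
      have QS: "\<Union>(set Q) = S" using Q(1) unfolding F_partition_def by auto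
      define R where "R = \<Union>((!) Q ` ({..<m} - {\<tau> 0}))"
      have RF: "R \<in> F" unfolding R_def
        apply (rule union_in_F[OF _ _ _ assms(3)])
        using QF t01 by auto
      have setQ: "set Q = (!) Q ` {..<m}" using Q(2) by (auto simp: set_conv_nth)
      have Rdisj: "Q ! (\<tau> 0) \<inter> R = {}" unfolding R_def using Qdisj t01 by auto
      have Run: "Q ! (\<tau> 0) \<union> R = S" unfolding R_def using QS setQ t01 by auto
      have sub1: "Q ! (\<tau> 1) \<subseteq> R" unfolding R_def using t01 by auto
      define B where "B = [A' ! 0, A' ! 1]"
      have cpB: "classification_problem S B" unfolding B_def
        proof (rule pair_cp[of S A' 0 1])
        show "classification_problem S A'" using H by blast
        show "0 < length A'" "1 < length A'" using H by auto
      qed simp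
      have "B \<in> class_k S F 2"
        unfolding class_k_def
      proof (intro CollectI conjI cpB exI[of _ "[Q ! (\<tau> 0), R]"])
        show "length B = 2" by (simp add: B_def)
        show "F_partition S F [Q ! (\<tau> 0), R]"
          unfolding F_partition_def pairwise_disj_def
          using Rdisj Run RF QF t01 by (auto simp: less_Suc_eq)
        show "length [Q ! (\<tau> 0), R] = 2" by simp
        show "vec_le B [Q ! (\<tau> 0), R]"
        proof -
          have "A' ! 0 \<subseteq> Q ! \<tau> 0" "A' ! 1 \<subseteq> Q ! \<tau> 1" using Q(5) m by auto
          then show ?thesis using sub1 unfolding vec_le_def B_def by (auto intro!: exI[of _ id] simp: less_Suc_eq)
        qed
      qed
      moreover have "[A ! \<sigma> 0, A ! \<sigma> 1] \<in> core_k S F 2" using P s01 by auto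
      moreover have "vec_le B [A ! \<sigma> 0, A ! \<sigma> 1]"
      proof -
        have "A' ! 0 \<subseteq> A ! \<sigma> 0" "A' ! 1 \<subseteq> A ! \<sigma> 1" using s(3) m by auto
        then show ?thesis unfolding vec_le_def B_def by (auto intro!: exI[of _ id] simp: less_Suc_eq)
      qed
      ultimately show False
      proof -
        assume c: "B \<in> class_k S F 2" "[A ! \<sigma> 0, A ! \<sigma> 1] \<in> core_k S F 2"
          "vec_le B [A ! \<sigma> 0, A ! \<sigma> 1]"
        have lB: "length B = 2" "1 < length B" by (simp_all add: B_def)
        from c(2) have "\<forall>A'. classification_problem S A' \<and> vec_le A' [A ! \<sigma> 0, A ! \<sigma> 1] \<and> 1 < length A' \<longrightarrow>
            A' \<notin> class_k S F (length A')" unfolding core_k_def by blast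
        then have "B \<notin> class_k S F (length B)" using cpB c(3) lB(2) by blast
        then show False using c(1) lB(1) by simp
      qed
    qed
  qed
qed

end
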